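(* In the meta-algorithm described in the context (with an arbitrary commitment subroutine), every corrupted search step $q$ whose current node $I^q$ is not a leaf satisfies $\Phi_{q+1}\le\Phi_q+1$.
   Context: Robust dynamic pricing: there are $T$ rounds and an unknown valuation $v^\star\in[0,1)$. At each round $t$ the seller posts $p_t\in[0,1]$; the true sale indicator is $y_t=\mathbbm 1\{p_t\le v^\star\}$, the seller observes $\sigma_t\in\{0,1\}$, and round $t$ is corrupted if $\sigma_t\neq y_t$. Meta-algorithm: let $D=\lceil\log_2 T\rceil$. Consider the complete binary tree of intervals of depth $D$ with root $[0,1)$, where each non-leaf node $[L,R)$ has children $[L,M)$ and $[M,R)$, $M=(L+R)/2$; the depth-$D$ nodes are the leaves, and $\ell^\star$ is the unique leaf containing $v^\star$. The algorithm keeps a current node $I$, initially the root. If $I=[L,R)$ is not a leaf, it performs a safety check — post $L$ and observe $\sigma_L$, post $R$ and observe $\sigma_R$; the check fails if $\sigma_L=0$ or $\sigma_R=1$ (by convention the query at $L=0$ and the query at $R=1$ always count as passing). On failure $I$ becomes its parent; otherwise it posts $M$, observes $\sigma_M$, and $I$ becomes $[M,R)$ if $\sigma_M=1$ and $[L,M)$ if $\sigma_M=0$. If $I$ is a leaf, a commitment subroutine is run on $I$; it posts prices on consecutive rounds and may return FAIL, in which case $I$ becomes its parent. Search steps: each iteration at a non-leaf node (safety check plus possible midpoint query) is one search step; each call of the commitment subroutine at a leaf is one search step. A search step is honest if none of its rounds is corrupted, and corrupted otherwise. $I^q$ is the current node at the start of search step $q$, and $\Phi_q=\mathrm{dist}(I^q,\ell^\star)$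 is the length of the shortest path between $I^q$ and $\ell^\star$ in the tree. *)

theory Defs
  imports Complex_Main
begin

text \<open>Nodes of the complete binary tree of dyadic intervals: a node (k, j) at depth k
  with j < 2^k is the interval [j / 2^k, (j+1) / 2^k).  The root is (0, 0).\<close>

type_synonym node = "nat \<times> nat"

definition tree_depth :: "nat \<Rightarrow> nat" where
  "tree_depth T = nat \<lceil>log 2 (real T)\<rceil>"

definition is_node :: "nat \<Rightarrow> node \<Rightarrow> bool" where
  "is_node D I \<longleftrightarrow> fst I \<le> D \<and> snd I < 2 ^ fst I"

definition is_leaf :: "nat \<Rightarrow> node \<Rightarrow> bool" where
  "is_leaf D I \<longleftrightarrow> is_node D I \<and> fst I = D"

definition nodeL :: "node \<Rightarrow> real" where
  "nodeL I = real (snd I) / 2 ^ fst I"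

definition nodeR :: "node \<Rightarrow> real" where
  "nodeR I = real (snd I + 1) / 2 ^ fst I"

definition nodeM :: "node \<Rightarrow> real" where
  "nodeM I = (nodeL I + nodeR I) / 2"

definition parent :: "node \<Rightarrow> node" where
  "parent I = (fst I - 1, snd I div 2)"

definition left_child :: "node \<Rightarrow> node" where
  "left_child I = (fst I + 1, 2 * snd I)"

definition right_child :: "node \<Rightarrow> node" where
  "right_child I = (fst I + 1, 2 * snd I + 1)"

definition tree_edge :: "nat \<Rightarrow> node \<Rightarrow> node \<Rightarrow> bool" where
  "tree_edge D a b \<longleftrightarrow> is_node D a \<and> is_node D b \<and>
     ((fst b = fst a + 1 \<and> snd b div 2 = snd a) \<or> (fst a = fst b + 1 \<and> snd a div 2 = snd b))"

definition tree_dist :: "nat \<Rightarrow> node \<Rightarrow> node \<Rightarrow> nat" where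
  "tree_dist D a b = (LEAST n. (a, b) \<in> {(x, y). tree_edge D x y} ^^ n)"

definition leaf_of :: "nat \<Rightarrow> real \<Rightarrow> node" where
  "leaf_of D v = (D, nat \<lfloor>v * 2 ^ D\<rfloor>)"

definition sale :: "real \<Rightarrow> real \<Rightarrow> bool" where
  "sale v p \<longleftrightarrow> p \<le> v"

definition check_pass :: "node \<Rightarrow> bool \<Rightarrow> bool \<Rightarrow> bool" where
  "check_pass I sL sR \<longleftrightarrow> (nodeL I = 0 \<or> sL) \<and> (nodeR I = 1 \<or> \<not> sR)"

definition search_step :: "node \<Rightarrow> bool \<Rightarrow> bool \<Rightarrow> bool \<Rightarrow> node" where
  "search_step I sL sR sM =
     (if \<not> check_pass I sL sR then parent I
      else if sM then right_child I else left_child I)"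

text \<open>The step is corrupted if some of its posted rounds has an observation different
  from the true sale indicator (the midpoint is posted only if the check passes).\<close>
definition step_corrupted :: "real \<Rightarrow> node \<Rightarrow> bool \<Rightarrow> bool \<Rightarrow> bool \<Rightarrow> bool" where
  "step_corrupted v I sL sR sM \<longleftrightarrow>
     sL \<noteq> sale v (nodeL I) \<or> sR \<noteq> sale v (nodeR I) \<or>
     (check_pass I sL sR \<and> sM \<noteq> sale v (nodeM I))"

end

theory Submission
  imports Defs
begin

lemma edge_sym: "tree_edge D a b \<Longrightarrow> tree_edge D b a"
  unfolding tree_edge_def by auto

lemma dist_adj:
  assumes "tree_edge D J I \<or> J = I"
  shows "tree_dist D J l \<le> tree_dist D I l + 1"
proof (cases "J = I")
  case True thus ?thesis by simp
next
  case False
  let ?R = "{(x, y). tree_edge D x y}"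
  have e: "tree_edge D J I" using assms False by auto
  show ?thesis
  proof (cases "\<exists>n. (I, l) \<in> ?R ^^ n")
    case True
    then have "(I, l) \<in> ?R ^^ (LEAST n. (I, l) \<in> ?R ^^ n)" by (rule LeastI_ex)
    then have "(J, l) \<in> ?R ^^ Suc (LEAST n. (I, l) \<in> ?R ^^ n)"
      using e by (intro relpow_Suc_I2) auto
    then show ?thesis unfolding tree_dist_def by (simp add: Least_le)
  next
    case nI: False
    have nJ: "\<not> (\<exists>n. (J, l) \<in> ?R ^^ n)"
    proof
      assume "\<exists>n. (J, l) \<in> ?R ^^ n"
      then obtain n where "(J, l) \<in> ?R ^^ n" by blast
      then have "(I, l) \<in> ?R ^^ Suc n" using edge_sym[OF e] by (intro relpow_Suc_I2) auto
      then show False using nI by blast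
    qed
    have "(\<lambda>n. (J, l) \<in> ?R ^^ n) = (\<lambda>n. (I, l) \<in> ?R ^^ n)" using nI nJ by auto
    then have "tree_dist D J l = tree_dist D I l" unfolding tree_dist_def by simp
    then show ?thesis by simp
  qed
qed

theorem lemma3p2:
  fixes T :: nat and v :: real and I :: node and sL sR sM :: bool
  assumes "T \<ge> 1"
    and "0 \<le> v" and "v < 1"
    and "is_node (tree_depth T) I"
    and "\<not> is_leaf (tree_depth T) I"
    and "step_corrupted v I sL sR sM"
  shows "tree_dist (tree_depth T) (search_step I sL sR sM) (leaf_of (tree_depth T) v)
         \<le> tree_dist (tree_depth T) I (leaf_of (tree_depth T) v) + 1"
proof -
  define D where "D = tree_depth T"
  obtain k j where I: "I = (k, j)" by (cases I)
  have kD: "k < D" and jk: "j < 2 ^ k" using assms(4,5) unfolding D_def is_leaf_def is_node_def I by auto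
  have adj: "tree_edge D (search_step I sL sR sM) I \<or> search_step I sL sR sM = I"
  proof -
    have p: "tree_edge D (parent I) I \<or> parent I = I"
    proof (cases k)
      case 0 thus ?thesis using jk by (simp add: I parent_def)
    next
      case (Suc k')
      have "j div 2 < 2 ^ k'" using jk Suc by auto
      thus ?thesis using Suc kD jk by (simp add: I parent_def tree_edge_def is_node_def)
    qed
    have "j * 2 < 2 ^ k * 2" "j * 2 + 1 < 2 ^ k * 2" using jk by auto
    then have "tree_edge D (left_child I) I" "tree_edge D (right_child I) I"
      using kD jk by (auto simp add: I left_child_def right_child_def tree_edge_def is_node_def)
    thus ?thesis using p unfolding search_step_def by auto
  qed
  show ?thesis using dist_adj[OF adj] unfolding D_def .
qed

end
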